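(* In every strategic game (in the setting described in the context, with equivalent priors) with imperfect information, Assumption BAY is violated.
   Context: Setting: there are $n\ge 2$ players and a measurable space $(\Omega,\mathcal{F})$. Each player $i$ has a prior $p_i$ on $\mathcal{F}$, an action set $A_i\subseteq\mathbb{R}$ with $|A_i|>1$, and a finite private information partition $\mathcal{I}_i$ of $\Omega$ into nonempty measurable events; the coarsest common refinement of the $\mathcal{I}_i$ is measurable. The priors are equivalent: $p_i(F)=0$ iff $p_j(F)=0$ for all $F\in\mathcal{F}$, $i,j$. Events of positive probability are called substantial, those of probability zero null. A strategy of player $i$ is a $\sigma(\mathcal{I}_i)$-measurable function $s_i:\Omega\to A_i$, and each player may choose any such function. Let $s^i$ be the tuple of the actual strategies of the other players. For each substantial $I_i\in\mathcal{I}_i$ and action $a_i\in A_i$ chosen on $I_i$, player $i$ has a conjecture $\psi_i(I_i,a_i)$ about the other players' strategies, unique up to $p_i(\cdot\mid I_i)$-null events. Player $i$ has imperfect information if there exist a substantial $I_i\in\mathcal{I}_i$, a player $j\neq i$ and $I_j\in\mathcal{I}_j$ with $0<p_i(I_j\mid I_i)<1$; the game has imperfect information if some player does. Assumption BAY: for every player $i$, each substantial $I_i\in\mathcal{I}_i$ and each $a_i\in A_i$, $\psi_i(I_i,a_i)=s^i$ except on $p_i(\cdot\mid I_i)$-null events, where $s^i$ is the true response of the others; i.e., each player's action on a substantial information cell uniquely and correctly determines the other players' strategies up to null events. *)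

theory Defs
  imports "HOL-Probability.Probability"
begin

text \<open>Players are the indices 0..<n. The measurable space is given by a measure M
  (only its sets and space are used). Priors are p i, information partitions P i,
  action sets A i.\<close>

definition fin_partition :: "'a measure \<Rightarrow> 'a set set \<Rightarrow> bool" where
  "fin_partition M Q \<longleftrightarrow> finite Q \<and> (\<forall>I\<in>Q. I \<noteq> {} \<and> I \<in> sets M)
      \<and> \<Union>Q = space M \<and> disjoint Q"

definition is_strategy :: "'a measure \<Rightarrow> 'a set set \<Rightarrow> real set \<Rightarrow> ('a \<Rightarrow> real) \<Rightarrow> bool" where
  "is_strategy M Q A s \<longleftrightarrow> s \<in> measurable (sigma (space M) Q) borel \<and> (\<forall>\<omega>\<in>space M. s \<omega> \<in> A)"

definition game :: "nat \<Rightarrow> 'a measure \<Rightarrow> (nat \<Rightarrow> 'a measure) \<Rightarrow> (nat \<Rightarrow> real set)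
     \<Rightarrow> (nat \<Rightarrow> 'a set set) \<Rightarrow> bool" where
  "game n M p A P \<longleftrightarrow> n \<ge> 2
     \<and> (\<forall>i<n. prob_space (p i) \<and> sets (p i) = sets M)
     \<and> (\<forall>i<n. \<exists>x\<in>A i. \<exists>y\<in>A i. x \<noteq> y)
     \<and> (\<forall>i<n. fin_partition M (P i))
     \<and> (\<forall>f. (\<forall>i<n. f i \<in> P i) \<longrightarrow> (\<Inter>i\<in>{..<n}. f i) \<in> sets M)
     \<and> (\<forall>F\<in>sets M. \<forall>i<n. \<forall>j<n. measure (p i) F = 0 \<longleftrightarrow> measure (p j) F = 0)"

definition cond_prob :: "'a measure \<Rightarrow> 'a set \<Rightarrow> 'a set \<Rightarrow> real" where
  "cond_prob q J I = measure q (J \<inter> I) / measure q I"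

definition imperfect_info_player :: "nat \<Rightarrow> (nat \<Rightarrow> 'a measure) \<Rightarrow> (nat \<Rightarrow> 'a set set) \<Rightarrow> nat \<Rightarrow> bool" where
  "imperfect_info_player n p P i \<longleftrightarrow>
     (\<exists>I\<in>P i. measure (p i) I > 0 \<and>
        (\<exists>j<n. j \<noteq> i \<and> (\<exists>J\<in>P j. 0 < cond_prob (p i) J I \<and> cond_prob (p i) J I < 1)))"

definition imperfect_info :: "nat \<Rightarrow> (nat \<Rightarrow> 'a measure) \<Rightarrow> (nat \<Rightarrow> 'a set set) \<Rightarrow> bool" where
  "imperfect_info n p P \<longleftrightarrow> (\<exists>i<n. imperfect_info_player n p P i)"

text \<open>Conjectures: psi i I a is the tuple (indexed by j) of strategies player i conjectures
  for the others when choosing action a on cell I.\<close>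
definition conjectures :: "nat \<Rightarrow> 'a measure \<Rightarrow> (nat \<Rightarrow> real set) \<Rightarrow> (nat \<Rightarrow> 'a set set)
     \<Rightarrow> (nat \<Rightarrow> 'a set \<Rightarrow> real \<Rightarrow> nat \<Rightarrow> 'a \<Rightarrow> real) \<Rightarrow> bool" where
  "conjectures n M A P \<psi> \<longleftrightarrow> (\<forall>i<n. \<forall>I\<in>P i. \<forall>a\<in>A i. \<forall>j<n. j \<noteq> i \<longrightarrow>
       is_strategy M (P j) (A j) (\<psi> i I a j))"

text \<open>W is the set of possible actual strategy profiles.\<close>
definition free_choice_worlds :: "nat \<Rightarrow> 'a measure \<Rightarrow> (nat \<Rightarrow> real set) \<Rightarrow> (nat \<Rightarrow> 'a set set)
     \<Rightarrow> (nat \<Rightarrow> 'a \<Rightarrow> real) set \<Rightarrow> bool" where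
  "free_choice_worlds n M A P W \<longleftrightarrow>
     (\<forall>s\<in>W. \<forall>i<n. is_strategy M (P i) (A i) (s i))
     \<and> (\<forall>i<n. \<forall>\<sigma>. is_strategy M (P i) (A i) \<sigma> \<longrightarrow> (\<exists>s\<in>W. \<forall>\<omega>\<in>space M. s i \<omega> = \<sigma> \<omega>))"

definition BAY :: "nat \<Rightarrow> (nat \<Rightarrow> 'a measure) \<Rightarrow> (nat \<Rightarrow> real set) \<Rightarrow> (nat \<Rightarrow> 'a set set)
     \<Rightarrow> (nat \<Rightarrow> 'a \<Rightarrow> real) set \<Rightarrow> (nat \<Rightarrow> 'a set \<Rightarrow> real \<Rightarrow> nat \<Rightarrow> 'a \<Rightarrow> real) \<Rightarrow> bool" where
  "BAY n p A P W \<psi> \<longleftrightarrow> (\<forall>s\<in>W. \<forall>i<n. \<forall>I\<in>P i. \<forall>a\<in>A i.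
       measure (p i) I > 0 \<and> (\<forall>\<omega>\<in>I. s i \<omega> = a) \<longrightarrow>
       (AE \<omega> in p i. \<omega> \<in> I \<longrightarrow> (\<forall>j<n. j \<noteq> i \<longrightarrow> \<psi> i I a j \<omega> = s j \<omega>)))"

end

theory Submission
  imports Defs
begin

lemma sigma_partition_cells:
  assumes "X \<in> sigma_sets \<Omega> Q" "disjoint Q" "\<Union>Q = \<Omega>"
  shows "\<forall>C\<in>Q. C \<subseteq> X \<or> C \<inter> X = {}"
  using assms(1)
proof (induction rule: sigma_sets.induct)
  case (Basic a)
  then show ?case using assms(2) by (metis disjointD inf.orderE order_refl)
next
  case Empty
  then show ?case by simp
next
  case (Compl a)
  then show ?case using assms(3) by blast
next
  case (Union f)
  then show ?case by blast
qed

lemma strat_const: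
  assumes "fin_partition M Q" "is_strategy M Q A s" "I \<in> Q" "\<omega> \<in> I" "\<omega>' \<in> I"
  shows "s \<omega>' = s \<omega>"
proof -
  have QP: "Q \<subseteq> Pow (space M)" using assms(1) unfolding fin_partition_def by auto
  have sm: "s \<in> measurable (sigma (space M) Q) borel" using assms(2) unfolding is_strategy_def by auto
  have "s -` {s \<omega>} \<inter> space (sigma (space M) Q) \<in> sets (sigma (space M) Q)"
    using measurable_sets[OF sm] by auto
  hence "s -` {s \<omega>} \<inter> space M \<in> sigma_sets (space M) Q"
    using QP by (simp add: sets_measure_of space_measure_of_conv)
  hence "\<forall>C\<in>Q. C \<subseteq> s -` {s \<omega>} \<inter> space M \<or> C \<inter> (s -` {s \<omega>} \<inter> space M) = {}"
    by (rule sigma_partition_cells) (use assms(1) in \<open>auto simp: fin_partition_def\<close>)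
  hence "I \<subseteq> s -` {s \<omega>} \<inter> space M \<or> I \<inter> (s -` {s \<omega>} \<inter> space M) = {}"
    using assms(3) by blast
  moreover have "\<omega> \<in> space M" using QP assms(3,4) by blast
  ultimately have "I \<subseteq> s -` {s \<omega>}" using assms(4) by blast
  thus ?thesis using assms(5) by blast
qed

lemma strat_if:
  assumes "fin_partition M Q" "J \<in> Q" "x \<in> A" "y \<in> A"
  shows "is_strategy M Q A (\<lambda>\<omega>. if \<omega> \<in> J then x else y)"
proof -
  have QP: "Q \<subseteq> Pow (space M)" using assms(1) unfolding fin_partition_def by auto
  have "J \<in> sets (sigma (space M) Q)" using QP assms(2) by (simp add: sets_measure_of)
  hence "{\<omega> \<in> space (sigma (space M) Q). \<omega> \<in> J} \<in> sets (sigma (space M) Q)"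
  proof -
    have "{\<omega> \<in> space (sigma (space M) Q). \<omega> \<in> J} = J"
      using sets.sets_into_space[OF \<open>J \<in> sets (sigma (space M) Q)\<close>] by blast
    thus ?thesis using \<open>J \<in> sets (sigma (space M) Q)\<close> by simp
  qed
  hence "(\<lambda>\<omega>. if \<omega> \<in> J then x else y) \<in> measurable (sigma (space M) Q) borel"
    by (intro measurable_If) auto
  thus ?thesis unfolding is_strategy_def using assms by auto
qed

theorem theorem2:
  fixes n :: nat and M :: "'a measure" and p :: "nat \<Rightarrow> 'a measure"
    and A :: "nat \<Rightarrow> real set" and P :: "nat \<Rightarrow> 'a set set"
    and \<psi> :: "nat \<Rightarrow> 'a set \<Rightarrow> real \<Rightarrow> nat \<Rightarrow> 'a \<Rightarrow> real"
    and W :: "(nat \<Rightarrow> 'a \<Rightarrow> real) set"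
  assumes "game n M p A P"
    and "imperfect_info n p P"
    and "conjectures n M A P \<psi>"
    and "free_choice_worlds n M A P W"
  shows "\<not> BAY n p A P W \<psi>"
proof
  assume bay: "BAY n p A P W \<psi>"
  obtain i I j J where i: "i < n" and I: "I \<in> P i" and pI: "measure (p i) I > 0"
    and j: "j < n" "j \<noteq> i" and J: "J \<in> P j"
    and c0: "0 < cond_prob (p i) J I" and c1: "cond_prob (p i) J I < 1"
    using assms(2) unfolding imperfect_info_def imperfect_info_player_def by blast
  note gd = assms(1)[unfolded game_def]
  have g1: "\<forall>i<n. prob_space (p i) \<and> sets (p i) = sets M" using gd by (elim conjE)
  have g2: "\<forall>i<n. \<exists>x\<in>A i. \<exists>y\<in>A i. x \<noteq> y" using gd by (elim conjE)
  have g3: "\<forall>i<n. fin_partition M (P i)" using gd by (elim conjE)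
  have g4: "\<forall>F\<in>sets M. \<forall>i<n. \<forall>j<n. measure (p i) F = 0 \<longleftrightarrow> measure (p j) F = 0"
    using gd by (elim conjE)
  note g = g1 g2 g3 g4
  have fpi: "fin_partition M (P i)" and fpj: "fin_partition M (P j)" using g(3) i j by auto
  have Is: "I \<in> sets M" "I \<subseteq> space M" using fpi I unfolding fin_partition_def by auto
  have Js: "J \<in> sets M" "J \<subseteq> space M" using fpj J unfolding fin_partition_def by auto
  have spi1: "sets (p i) = sets M" using g(1) i by auto
  have spi: "sets (p i) = sets M" "space (p i) = space M" using spi1 sets_eq_imp_space_eq[OF spi1] by auto
  have spj1: "sets (p j) = sets M" using g(1) j by auto
  have spj: "sets (p j) = sets M" "space (p j) = space M" using spj1 sets_eq_imp_space_eq[OF spj1] by auto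
  interpret pi: prob_space "p i" using g(1) i by auto
  interpret pj: prob_space "p j" using g(1) j by auto
  obtain x y where xy: "x \<in> A j" "y \<in> A j" "x \<noteq> y" using g(2) j by blast
  have IJ: "J \<inter> I \<in> sets M" "I - J \<in> sets M" using Is Js by auto
  have mJI: "measure (p i) (J \<inter> I) > 0" using c0 pI unfolding cond_prob_def
    by (simp add: zero_less_divide_iff)
  have mIJ: "measure (p i) (I - J) > 0"
  proof -
    have "measure (p i) I = measure (p i) (J \<inter> I) + measure (p i) (I - J)"
    proof -
      have "measure (p i) (I - J) = measure (p i) I - measure (p i) (I \<inter> J)"
        using pi.finite_measure_Diff'[of I J] Is Js spi by simp
      thus ?thesis by (simp add: Int_commute)
    qed
    moreover have "measure (p i) (J \<inter> I) < measure (p i) I" using c1 pI unfolding cond_prob_def by simp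
    ultimately show ?thesis by linarith
  qed
  define \<sigma>1 where "\<sigma>1 = (\<lambda>\<omega>::'a. if \<omega> \<in> J then x else x)"
  define \<sigma>2 where "\<sigma>2 = (\<lambda>\<omega>::'a. if \<omega> \<in> J then x else y)"
  have st1: "is_strategy M (P j) (A j) \<sigma>1" unfolding \<sigma>1_def using strat_if[OF fpj J xy(1) xy(1)] .
  have st2: "is_strategy M (P j) (A j) \<sigma>2" unfolding \<sigma>2_def using strat_if[OF fpj J xy(1) xy(2)] .
  obtain s where s: "s \<in> W" "\<forall>\<omega>\<in>space M. s j \<omega> = \<sigma>1 \<omega>"
    using assms(4) st1 j unfolding free_choice_worlds_def by blast
  obtain t where t: "t \<in> W" "\<forall>\<omega>\<in>space M. t j \<omega> = \<sigma>2 \<omega>"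
    using assms(4) st2 j unfolding free_choice_worlds_def by blast
  have ssi: "is_strategy M (P i) (A i) (s i)" "is_strategy M (P i) (A i) (t i)"
    using assms(4) s(1) t(1) i unfolding free_choice_worlds_def by auto
  obtain \<omega>0 where \<omega>0: "\<omega>0 \<in> J \<inter> I" proof -
    have "J \<inter> I \<noteq> {}" using mJI by (metis less_irrefl measure_empty)
    thus ?thesis using that by blast
  qed
  define a where "a = s i \<omega>0"
  define b where "b = t i \<omega>0"
  have sa: "\<forall>\<omega>\<in>I. s i \<omega> = a" unfolding a_def using strat_const[OF fpi ssi(1) I] \<omega>0 by blast
  have tb: "\<forall>\<omega>\<in>I. t i \<omega> = b" unfolding b_def using strat_const[OF fpi ssi(2) I] \<omega>0 by blast
  have aA: "a \<in> A i" "b \<in> A i" using ssi \<omega>0 Is unfolding is_strategy_def a_def b_def by auto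
  have pJ: "measure (p j) J > 0"
  proof -
    have "measure (p j) (J \<inter> I) \<noteq> 0" using g(4)[rule_format, OF IJ(1) i j(1)] mJI by linarith
    hence "measure (p j) (J \<inter> I) > 0" by (simp add: order_less_le)
    also have "measure (p j) (J \<inter> I) \<le> measure (p j) J" using Js spj by (intro pj.finite_measure_mono) auto
    finally show ?thesis .
  qed
  have sJ: "\<forall>\<omega>\<in>J. s j \<omega> = x" "\<forall>\<omega>\<in>J. t j \<omega> = x" using s t Js unfolding \<sigma>1_def \<sigma>2_def by auto
  have A1: "AE \<omega> in p j. \<omega> \<in> J \<longrightarrow> (\<forall>k<n. k \<noteq> j \<longrightarrow> \<psi> j J x k \<omega> = s k \<omega>)"
    using bay[unfolded BAY_def, rule_format, OF s(1) j(1) J xy(1)] pJ sJ(1) by blast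
  have A2: "AE \<omega> in p j. \<omega> \<in> J \<longrightarrow> (\<forall>k<n. k \<noteq> j \<longrightarrow> \<psi> j J x k \<omega> = t k \<omega>)"
    using bay[unfolded BAY_def, rule_format, OF t(1) j(1) J xy(1)] pJ sJ(2) by blast
  have ab: "a = b"
  proof (rule ccontr)
    assume nab: "a \<noteq> b"
    have "AE \<omega> in p j. \<omega> \<notin> J \<inter> I"
      using A1 A2
    proof eventually_elim
      case (elim \<omega>)
      show ?case
      proof
        assume "\<omega> \<in> J \<inter> I"
        hence "s i \<omega> = t i \<omega>" using elim i j by auto
        thus False using sa tb nab \<open>\<omega> \<in> J \<inter> I\<close> by auto
      qed
    qed
    hence "emeasure (p j) (J \<inter> I) = 0"
      using AE_iff_measurable[of "J \<inter> I" "p j" "\<lambda>\<omega>. \<omega> \<notin> J \<inter> I"] IJ spj Js by auto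
    hence "measure (p j) (J \<inter> I) = 0" by (simp add: measure_def)
    hence "measure (p i) (J \<inter> I) = 0" using g(4)[rule_format, OF IJ(1) i j(1)] by linarith
    thus False using mJI by simp
  qed
  have B1: "AE \<omega> in p i. \<omega> \<in> I \<longrightarrow> (\<forall>k<n. k \<noteq> i \<longrightarrow> \<psi> i I a k \<omega> = s k \<omega>)"
    using bay[unfolded BAY_def, rule_format, OF s(1) i I aA(1)] pI sa by blast
  have B2: "AE \<omega> in p i. \<omega> \<in> I \<longrightarrow> (\<forall>k<n. k \<noteq> i \<longrightarrow> \<psi> i I a k \<omega> = t k \<omega>)"
    using bay[unfolded BAY_def, rule_format, OF t(1) i I aA(1)] pI tb ab by blast
  have "AE \<omega> in p i. \<omega> \<notin> I - J"
    using B1 B2 AE_space[of "p i"]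
  proof eventually_elim
    case (elim \<omega>)
    show ?case
    proof
      assume "\<omega> \<in> I - J"
      hence "s j \<omega> = t j \<omega>" using elim i j by auto
      thus False using s t xy \<open>\<omega> \<in> I - J\<close> elim spi unfolding \<sigma>1_def \<sigma>2_def by auto
    qed
  qed
  hence "emeasure (p i) (I - J) = 0"
    using AE_iff_measurable[of "I - J" "p i" "\<lambda>\<omega>. \<omega> \<notin> I - J"] IJ spi Is by auto
  hence "measure (p i) (I - J) = 0" by (simp add: measure_def)
  thus False using mIJ by simp
qed

end
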